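(* Consider the CETC closed loop (continuous-time event-triggering rule with parameters $\theta,\eta,\theta_m,\kappa_0,\kappa_1,\kappa_2>0$ and $m^0<0$), and let $F=\sup_k t_k$. Then the dynamic variable satisfies $m(t)<0$ for all $t\in[0,F)$.
   Context: Standing setting. Fix $\ell>0$, $\lambda_1,\lambda_2>0$, $c_1,c_2\in C^0([0,\ell];\mathbb R)$ and constants $q\ne0$, $\rho\ne0$ with $|\rho q|\le \tfrac12$. For $f_1,\dots,f_n\in L^2(0,\ell)$ write $\|(f_1,\dots,f_n)^T\|=(\sum_i\|f_i\|^2_{L^2(0,\ell)})^{1/2}$. Let $\mathcal T=\{(x,\xi):0\le\xi\le x\le\ell\}$. Plant: $\partial_t u=-\lambda_1\partial_x u+c_1(x)v$, $\partial_t v=\lambda_2\partial_x v+c_2(x)u$, $u(0,t)=qv(0,t)$, $v(\ell,t)=\rho u(\ell,t)+\mathcal U(t)$, where $\mathcal U$ is the applied boundary input; measured output $v(0,t)$. Kernels (each system below has a unique continuous solution on $\mathcal T$): (P) $\lambda_1(\partial_x+\partial_\xi)P^{\alpha\alpha}=c_1(x)P^{\beta\alpha}$, $\lambda_1\partial_xP^{\alpha\beta}-\lambda_2\partial_\xi P^{\alpha\beta}=c_1(x)P^{\beta\beta}$, $\lambda_2\partial_xP^{\beta\alpha}-\lambda_1\partial_\xi P^{\beta\alpha}=-c_2(x)P^{\alpha\alpha}$, $\lambda_2(\partial_x+\partial_\xi)P^{\beta\beta}=-c_2(x)P^{\alpha\beta}$, with $P^{\alpha\alpha}(\ell,\xi)=\rho^{-1}P^{\beta\alpha}(\ell,\xi)$,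 $P^{\alpha\beta}(x,x)=-\frac{c_1(x)}{\lambda_1+\lambda_2}$, $P^{\beta\beta}(\ell,\xi)=\rho P^{\alpha\beta}(\ell,\xi)$, $P^{\beta\alpha}(x,x)=\frac{c_2(x)}{\lambda_1+\lambda_2}$. (R) $\lambda_1(\partial_x+\partial_\xi)R^{uu}=-c_2(\xi)R^{uv}$, $\lambda_1\partial_xR^{uv}-\lambda_2\partial_\xi R^{uv}=-c_1(\xi)R^{uu}$, $\lambda_2\partial_xR^{vu}-\lambda_1\partial_\xi R^{vu}=c_2(\xi)R^{vv}$, $\lambda_2(\partial_x+\partial_\xi)R^{vv}=c_1(\xi)R^{vu}$, with $R^{uu}(\ell,\xi)=\rho^{-1}R^{vu}(\ell,\xi)$, $R^{uv}(x,x)=-\frac{c_1(x)}{\lambda_1+\lambda_2}$, $R^{vv}(\ell,\xi)=\rho R^{uv}(\ell,\xi)$, $R^{vu}(x,x)=\frac{c_2(x)}{\lambda_1+\lambda_2}$. (K) $\lambda_1(\partial_x+\partial_\xi)K^{uu}=-c_2(\xi)K^{uv}$, $\lambda_1\partial_xK^{uv}-\lambda_2\partial_\xi K^{uv}=-c_1(\xi)K^{uu}$, $\lambda_2\partial_xK^{vu}-\lambda_1\partial_\xi K^{vu}=c_2(\xi)K^{vv}$, $\lambda_2(\partial_x+\partial_\xi)K^{vv}=c_1(\xi)K^{vu}$, with $K^{uu}(x,0)=\frac{\lambda_2}{q\lambda_1}K^{uv}(x,0)$, $K^{uv}(x,x)=\frac{c_1(x)}{\lambda_1+\lambda_2}$,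 $K^{vv}(x,0)=\frac{q\lambda_1}{\lambda_2}K^{vu}(x,0)$, $K^{vu}(x,x)=-\frac{c_2(x)}{\lambda_1+\lambda_2}$. Observer: with gains $p_1(x)=-\lambda_2P^{\alpha\beta}(x,0)$, $p_2(x)=-\lambda_2P^{\beta\beta}(x,0)$ and $\tilde v(0,t)=v(0,t)-\hat v(0,t)$: $\partial_t\hat u=-\lambda_1\partial_x\hat u+c_1(x)\hat v+p_1(x)\tilde v(0,t)$, $\partial_t\hat v=\lambda_2\partial_x\hat v+c_2(x)\hat u+p_2(x)\tilde v(0,t)$, $\hat u(0,t)=qv(0,t)$, $\hat v(\ell,t)=\rho\hat u(\ell,t)+\mathcal U(t)$. Transformed variables: $\tilde u=u-\hat u$, $\tilde v=v-\hat v$; $\tilde\beta(x,t)=\tilde v+\int_0^xR^{vu}(x,\xi)\tilde u(\xi,t)d\xi+\int_0^xR^{vv}(x,\xi)\tilde v(\xi,t)d\xi$ (so $\tilde\beta(0,t)=\tilde v(0,t)$); $\hat\alpha(x,t)=\hat u-\int_0^xK^{uu}(x,\xi)\hat u(\xi,t)d\xi-\int_0^xK^{uv}(x,\xi)\hat v(\xi,t)d\xi$, $\hat\beta(x,t)=\hat v-\int_0^xK^{vu}(x,\xi)\hat u(\xi,t)d\xi-\int_0^xK^{vv}(x,\xi)\hat v(\xi,t)d\xi$. Nominal feedback: $U(t)=\int_0^\ell N^u(\xi)\hat u(\xi,t)d\xi+\int_0^\ell N^v(\xi)\hat v(\xi,t)d\xi$ with $N^u(\xi)=K^{vu}(\ell,\xi)-\rho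 K^{uu}(\ell,\xi)$, $N^v(\xi)=K^{vv}(\ell,\xi)-\rho K^{uv}(\ell,\xi)$. Sampled-data input: given event times $0=t_0<t_1<\cdots$, the applied input is $\mathcal U(t)=U(t_k)$ for $t\in[t_k,t_{k+1})$ in both plant and observer; the input holding error is $d(t)=U(t_k)-U(t)$ for $t\in[t_k,t_{k+1})$. Dynamic variable: given $\eta,\theta_m,\kappa_0,\kappa_1,\kappa_2>0$ and $m^0<0$, $m$ is the continuous function with $m(0)=m^0$ that on each $(t_k,t_{k+1})$ solves $\dot m=-\eta m+\theta_m d^2-\kappa_0\|(\hat\alpha(\cdot,t),\hat\beta(\cdot,t))^T\|^2-\kappa_1\hat\alpha^2(\ell,t)-\kappa_2\tilde\beta^2(0,t)$. CETC rule: for $\theta>0$ let $\Gamma^c(t)=\theta d^2(t)+m(t)$; the event times are $t_0=0$ and $t_{k+1}=\inf\{t>t_k:\Gamma^c(t)>0\}$. *)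

theory Defs
  imports "HOL-Analysis.Analysis"
begin

type_synonym kernel = "real \<Rightarrow> real \<Rightarrow> real"
  (* kernels as functions of (x, xi); trajectories as functions of (x, t) *)

definition tri :: "real \<Rightarrow> (real \<times> real) set" where
  "tri L = {(x, xi). 0 \<le> xi \<and> xi \<le> x \<and> x \<le> L}"

definition char_deriv :: "kernel \<Rightarrow> real \<Rightarrow> real \<Rightarrow> real \<Rightarrow> real \<Rightarrow> real \<Rightarrow> bool" where
  "char_deriv f a b x xi r \<longleftrightarrow> ((\<lambda>s. f (x + a * s) (xi + b * s)) has_real_derivative r) (at 0)"

definition cont_tri :: "real \<Rightarrow> kernel \<Rightarrow> bool" where
  "cont_tri L f \<longleftrightarrow> continuous_on (tri L) (\<lambda>(x, xi). f x xi)"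

definition P_kernels :: "real \<Rightarrow> real \<Rightarrow> real \<Rightarrow> (real \<Rightarrow> real) \<Rightarrow> (real \<Rightarrow> real) \<Rightarrow> real
    \<Rightarrow> kernel \<Rightarrow> kernel \<Rightarrow> kernel \<Rightarrow> kernel \<Rightarrow> bool" where
  "P_kernels L l1 l2 c1 c2 \<rho> Paa Pab Pba Pbb \<longleftrightarrow>
     cont_tri L Paa \<and> cont_tri L Pab \<and> cont_tri L Pba \<and> cont_tri L Pbb \<and>
     (\<forall>x xi. 0 < xi \<and> xi < x \<and> x < L \<longrightarrow>
        char_deriv Paa l1 l1 x xi (c1 x * Pba x xi) \<and>
        char_deriv Pab l1 (- l2) x xi (c1 x * Pbb x xi) \<and>
        char_deriv Pba l2 (- l1) x xi (- (c2 x * Paa x xi)) \<and>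
        char_deriv Pbb l2 l2 x xi (- (c2 x * Pab x xi))) \<and>
     (\<forall>xi\<in>{0..L}. Paa L xi = Pba L xi / \<rho> \<and> Pbb L xi = \<rho> * Pab L xi) \<and>
     (\<forall>x\<in>{0..L}. Pab x x = - c1 x / (l1 + l2) \<and> Pba x x = c2 x / (l1 + l2))"

definition R_kernels :: "real \<Rightarrow> real \<Rightarrow> real \<Rightarrow> (real \<Rightarrow> real) \<Rightarrow> (real \<Rightarrow> real) \<Rightarrow> real
    \<Rightarrow> kernel \<Rightarrow> kernel \<Rightarrow> kernel \<Rightarrow> kernel \<Rightarrow> bool" where
  "R_kernels L l1 l2 c1 c2 \<rho> Ruu Ruv Rvu Rvv \<longleftrightarrow>
     cont_tri L Ruu \<and> cont_tri L Ruv \<and> cont_tri L Rvu \<and> cont_tri L Rvv \<and>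
     (\<forall>x xi. 0 < xi \<and> xi < x \<and> x < L \<longrightarrow>
        char_deriv Ruu l1 l1 x xi (- (c2 xi * Ruv x xi)) \<and>
        char_deriv Ruv l1 (- l2) x xi (- (c1 xi * Ruu x xi)) \<and>
        char_deriv Rvu l2 (- l1) x xi (c2 xi * Rvv x xi) \<and>
        char_deriv Rvv l2 l2 x xi (c1 xi * Rvu x xi)) \<and>
     (\<forall>xi\<in>{0..L}. Ruu L xi = Rvu L xi / \<rho> \<and> Rvv L xi = \<rho> * Ruv L xi) \<and>
     (\<forall>x\<in>{0..L}. Ruv x x = - c1 x / (l1 + l2) \<and> Rvu x x = c2 x / (l1 + l2))"

definition K_kernels :: "real \<Rightarrow> real \<Rightarrow> real \<Rightarrow> (real \<Rightarrow> real) \<Rightarrow> (real \<Rightarrow> real) \<Rightarrow> real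
    \<Rightarrow> kernel \<Rightarrow> kernel \<Rightarrow> kernel \<Rightarrow> kernel \<Rightarrow> bool" where
  "K_kernels L l1 l2 c1 c2 q Kuu Kuv Kvu Kvv \<longleftrightarrow>
     cont_tri L Kuu \<and> cont_tri L Kuv \<and> cont_tri L Kvu \<and> cont_tri L Kvv \<and>
     (\<forall>x xi. 0 < xi \<and> xi < x \<and> x < L \<longrightarrow>
        char_deriv Kuu l1 l1 x xi (- (c2 xi * Kuv x xi)) \<and>
        char_deriv Kuv l1 (- l2) x xi (- (c1 xi * Kuu x xi)) \<and>
        char_deriv Kvu l2 (- l1) x xi (c2 xi * Kvv x xi) \<and>
        char_deriv Kvv l2 l2 x xi (c1 xi * Kvu x xi)) \<and>
     (\<forall>x\<in>{0..L}. Kuu x 0 = l2 / (q * l1) * Kuv x 0 \<and> Kvv x 0 = q * l1 / l2 * Kvu x 0) \<and>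
     (\<forall>x\<in>{0..L}. Kuv x x = c1 x / (l1 + l2) \<and> Kvu x x = - c2 x / (l1 + l2))"

text \<open>Broad (characteristic) solution on times s >= tau of
  d_t u + a d_x u = S1,  d_t v - b d_x v = S2  on [0,L].\<close>
definition broad_pair :: "real \<Rightarrow> real \<Rightarrow> real \<Rightarrow> real \<Rightarrow> (real \<Rightarrow> real \<Rightarrow> real)
    \<Rightarrow> (real \<Rightarrow> real \<Rightarrow> real) \<Rightarrow> (real \<Rightarrow> real \<Rightarrow> real) \<Rightarrow> (real \<Rightarrow> real \<Rightarrow> real) \<Rightarrow> bool" where
  "broad_pair L a b tau S1 S2 u v \<longleftrightarrow>
     (\<forall>x s h. 0 \<le> x \<and> tau \<le> s \<and> 0 \<le> h \<and> x + a * h \<le> L \<longrightarrow>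
        (\<lambda>\<sigma>. S1 (x + a * \<sigma>) (s + \<sigma>)) integrable_on {0..h} \<and>
        u (x + a * h) (s + h) - u x s = integral {0..h} (\<lambda>\<sigma>. S1 (x + a * \<sigma>) (s + \<sigma>))) \<and>
     (\<forall>x s h. x \<le> L \<and> tau \<le> s \<and> 0 \<le> h \<and> 0 \<le> x - b * h \<longrightarrow>
        (\<lambda>\<sigma>. S2 (x - b * \<sigma>) (s + \<sigma>)) integrable_on {0..h} \<and>
        v (x - b * h) (s + h) - v x s = integral {0..h} (\<lambda>\<sigma>. S2 (x - b * \<sigma>) (s + \<sigma>)))"

definition tilde_beta :: "kernel \<Rightarrow> kernel \<Rightarrow> (real \<Rightarrow> real) \<Rightarrow> (real \<Rightarrow> real) \<Rightarrow> real \<Rightarrow> real" where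
  "tilde_beta Rvu Rvv ut vt x = vt x + integral {0..x} (\<lambda>xi. Rvu x xi * ut xi)
                                     + integral {0..x} (\<lambda>xi. Rvv x xi * vt xi)"

definition hat_alpha :: "kernel \<Rightarrow> kernel \<Rightarrow> (real \<Rightarrow> real) \<Rightarrow> (real \<Rightarrow> real) \<Rightarrow> real \<Rightarrow> real" where
  "hat_alpha Kuu Kuv uh vh x = uh x - integral {0..x} (\<lambda>xi. Kuu x xi * uh xi)
                                   - integral {0..x} (\<lambda>xi. Kuv x xi * vh xi)"

definition hat_beta :: "kernel \<Rightarrow> kernel \<Rightarrow> (real \<Rightarrow> real) \<Rightarrow> (real \<Rightarrow> real) \<Rightarrow> real \<Rightarrow> real" where
  "hat_beta Kvu Kvv uh vh x = vh x - integral {0..x} (\<lambda>xi. Kvu x xi * uh xi)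
                                  - integral {0..x} (\<lambda>xi. Kvv x xi * vh xi)"

definition sqnorm2 :: "real \<Rightarrow> (real \<Rightarrow> real) \<Rightarrow> (real \<Rightarrow> real) \<Rightarrow> real" where
  "sqnorm2 L f g = integral {0..L} (\<lambda>x. (f x)\<^sup>2) + integral {0..L} (\<lambda>x. (g x)\<^sup>2)"

definition nominal_U :: "real \<Rightarrow> real \<Rightarrow> kernel \<Rightarrow> kernel \<Rightarrow> kernel \<Rightarrow> kernel
    \<Rightarrow> (real \<Rightarrow> real) \<Rightarrow> (real \<Rightarrow> real) \<Rightarrow> real" where
  "nominal_U L \<rho> Kuu Kuv Kvu Kvv uh vh =
     integral {0..L} (\<lambda>xi. (Kvu L xi - \<rho> * Kuu L xi) * uh xi)
   + integral {0..L} (\<lambda>xi. (Kvv L xi - \<rho> * Kuv L xi) * vh xi)"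

text \<open>The k-th inter-event piece of the CETC closed loop: starting at event time tau = t_k,
  plant + observer run with the input held at U(t_k) (for all later times), together with
  the dynamic variable m (Caratheodory solution of its ODE) and the next event time given
  by the CETC rule evaluated along this held-input evolution.\<close>
definition cetc_piece ::
  "real \<Rightarrow> real \<Rightarrow> real \<Rightarrow> (real \<Rightarrow> real) \<Rightarrow> (real \<Rightarrow> real) \<Rightarrow> real \<Rightarrow> real
   \<Rightarrow> kernel \<Rightarrow> kernel \<Rightarrow> kernel \<Rightarrow> kernel \<Rightarrow> kernel \<Rightarrow> kernel \<Rightarrow> kernel \<Rightarrow> kernel
   \<Rightarrow> real \<Rightarrow> real \<Rightarrow> real \<Rightarrow> real \<Rightarrow> real \<Rightarrow> real
   \<Rightarrow> real \<Rightarrow> ereal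
   \<Rightarrow> (real \<Rightarrow> real \<Rightarrow> real) \<Rightarrow> (real \<Rightarrow> real \<Rightarrow> real) \<Rightarrow> (real \<Rightarrow> real \<Rightarrow> real)
   \<Rightarrow> (real \<Rightarrow> real \<Rightarrow> real) \<Rightarrow> (real \<Rightarrow> real) \<Rightarrow> bool" where
  "cetc_piece L l1 l2 c1 c2 q \<rho> Pab Pbb Rvu Rvv Kuu Kuv Kvu Kvv
      \<theta> \<eta> \<theta>m \<kappa>0 \<kappa>1 \<kappa>2 tau tnext u v uh vh m \<longleftrightarrow>
   (let p1 = (\<lambda>x. - l2 * Pab x 0); p2 = (\<lambda>x. - l2 * Pbb x 0);
        Ut = (\<lambda>s. nominal_U L \<rho> Kuu Kuv Kvu Kvv (\<lambda>x. uh x s) (\<lambda>x. vh x s));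
        d = (\<lambda>s. Ut tau - Ut s);
        rhs = (\<lambda>s. - \<eta> * m s + \<theta>m * (d s)\<^sup>2
                 - \<kappa>0 * sqnorm2 L (hat_alpha Kuu Kuv (\<lambda>x. uh x s) (\<lambda>x. vh x s))
                                  (hat_beta Kvu Kvv (\<lambda>x. uh x s) (\<lambda>x. vh x s))
                 - \<kappa>1 * (hat_alpha Kuu Kuv (\<lambda>x. uh x s) (\<lambda>x. vh x s) L)\<^sup>2
                 - \<kappa>2 * (tilde_beta Rvu Rvv (\<lambda>x. u x s - uh x s) (\<lambda>x. v x s - vh x s) 0)\<^sup>2)
    in broad_pair L l1 l2 tau (\<lambda>x s. c1 x * v x s) (\<lambda>x s. c2 x * u x s) u v \<and>
       broad_pair L l1 l2 tau
         (\<lambda>x s. c1 x * vh x s + p1 x * (v 0 s - vh 0 s))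
         (\<lambda>x s. c2 x * uh x s + p2 x * (v 0 s - vh 0 s)) uh vh \<and>
       (\<forall>s>tau. u 0 s = q * v 0 s \<and> v L s = \<rho> * u L s + Ut tau \<and>
                uh 0 s = q * v 0 s \<and> vh L s = \<rho> * uh L s + Ut tau) \<and>
       (\<forall>s\<ge>tau. rhs integrable_on {tau..s} \<and> m s = m tau + integral {tau..s} rhs) \<and>
       tnext = Inf {ereal s | s. tau < s \<and> \<theta> * (d s)\<^sup>2 + m s > 0})"

text \<open>The whole CETC closed loop: event times t (extended reals, \<infinity> = no further event),
  and for every finite event time t k the k-th piece, glued continuously to the next one.\<close>
definition cetc_closed_loop ::
  "real \<Rightarrow> real \<Rightarrow> real \<Rightarrow> (real \<Rightarrow> real) \<Rightarrow> (real \<Rightarrow> real) \<Rightarrow> real \<Rightarrow> real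
   \<Rightarrow> kernel \<Rightarrow> kernel \<Rightarrow> kernel \<Rightarrow> kernel \<Rightarrow> kernel \<Rightarrow> kernel \<Rightarrow> kernel \<Rightarrow> kernel
   \<Rightarrow> real \<Rightarrow> real \<Rightarrow> real \<Rightarrow> real \<Rightarrow> real \<Rightarrow> real \<Rightarrow> real
   \<Rightarrow> (nat \<Rightarrow> ereal)
   \<Rightarrow> (nat \<Rightarrow> real \<Rightarrow> real \<Rightarrow> real) \<Rightarrow> (nat \<Rightarrow> real \<Rightarrow> real \<Rightarrow> real) \<Rightarrow> (nat \<Rightarrow> real \<Rightarrow> real \<Rightarrow> real)
   \<Rightarrow> (nat \<Rightarrow> real \<Rightarrow> real \<Rightarrow> real) \<Rightarrow> (nat \<Rightarrow> real \<Rightarrow> real) \<Rightarrow> bool" where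
  "cetc_closed_loop L l1 l2 c1 c2 q \<rho> Pab Pbb Rvu Rvv Kuu Kuv Kvu Kvv
      \<theta> \<eta> \<theta>m \<kappa>0 \<kappa>1 \<kappa>2 m0 t u v uh vh m \<longleftrightarrow>
   t 0 = 0 \<and> m 0 0 = m0 \<and>
   (\<forall>k tau. t k = ereal tau \<longrightarrow>
      cetc_piece L l1 l2 c1 c2 q \<rho> Pab Pbb Rvu Rvv Kuu Kuv Kvu Kvv
        \<theta> \<eta> \<theta>m \<kappa>0 \<kappa>1 \<kappa>2 tau (t (Suc k)) (u k) (v k) (uh k) (vh k) (m k)) \<and>
   (\<forall>k tau. t (Suc k) = ereal tau \<longrightarrow>
      (\<forall>x\<in>{0..L}. u (Suc k) x tau = u k x tau \<and> v (Suc k) x tau = v k x tau \<and>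
                  uh (Suc k) x tau = uh k x tau \<and> vh (Suc k) x tau = vh k x tau) \<and>
      m (Suc k) tau = m k tau)"

text \<open>The dynamic variable of the closed loop: on [t_k, t_(k+1)) it is the k-th piece.\<close>
definition m_cl :: "(nat \<Rightarrow> ereal) \<Rightarrow> (nat \<Rightarrow> real \<Rightarrow> real) \<Rightarrow> real \<Rightarrow> real" where
  "m_cl t m s = m (LEAST k. ereal s < t (Suc k)) s"

end

theory Submission
  imports Defs
begin

lemma piece_neg:
  fixes rhs m d :: "real \<Rightarrow> real"
  assumes int: "\<forall>s\<ge>tau. rhs integrable_on {tau..s} \<and> m s = m tau + integral {tau..s} rhs"
    and tn: "tnext = Inf {ereal s | s. tau < s \<and> \<theta> * (d s)\<^sup>2 + m s > 0}"
    and bnd: "\<forall>s. rhs s \<le> - \<eta> * m s + \<theta>m * (d s)\<^sup>2"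
    and pos: "\<theta> > 0" "\<eta> > 0" "\<theta>m > 0" and m0: "m tau < 0"
    and sf: "tau \<le> sf" "ereal sf \<le> tnext"
  shows "m sf < 0"
proof (rule ccontr)
  assume neg: "\<not> m sf < 0"
  define c where "c = \<eta> + \<theta>m/\<theta>"
  have cpos: "c > 0" using pos by (simp add: c_def add_pos_pos)
  have iI: "rhs integrable_on {tau..s}" if "tau \<le> s" for s using int that by blast
  have mI: "m s = m tau + integral {tau..s} rhs" if "tau \<le> s" for s using int that by blast
  have intS: "rhs integrable_on {tau..sf}" using iI sf by blast
  have "continuous_on {tau..sf} (\<lambda>s. m tau + integral {tau..s} rhs)"
    by (rule continuous_on_add[OF continuous_on_const indefinite_integral_continuous_1[OF intS]])
  then have cont: "continuous_on {tau..sf} m"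
    by (rule continuous_on_eq) (metis mI atLeastAtMost_iff)
  have trig: "\<theta> * (d \<sigma>)\<^sup>2 + m \<sigma> \<le> 0" if "tau < \<sigma>" "ereal \<sigma> < tnext" for \<sigma>
  proof (rule ccontr)
    assume "\<not> ?thesis"
    then have "ereal \<sigma> \<in> {ereal s | s. tau < s \<and> \<theta> * (d s)\<^sup>2 + m s > 0}" using that by auto
    then have "tnext \<le> ereal \<sigma>" unfolding tn by (rule Inf_lower)
    then show False using that by simp
  qed
  define Z where "Z = {tau..sf} \<inter> m -` {0..}"
  have clZ: "closed Z" unfolding Z_def by (rule continuous_closed_preimage[OF cont]) auto
  have sfZ: "sf \<in> Z" using neg sf by (auto simp: Z_def)
  have bdZ: "bdd_below Z" unfolding Z_def by (rule bdd_belowI[of _ tau]) auto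
  define z where "z = Inf Z"
  have zZ: "z \<in> Z" unfolding z_def using closed_contains_Inf[OF _ bdZ clZ] sfZ by auto
  have z: "tau \<le> z" "z \<le> sf" "0 \<le> m z" using zZ by (auto simp: Z_def)
  have tz: "tau < z" using z m0 by (cases "tau = z") auto
  have below: "m s < 0" if "tau \<le> s" "s < z" for s
  proof (rule ccontr)
    assume "\<not> m s < 0"
    then have "s \<in> Z" using that z by (auto simp: Z_def)
    then have "z \<le> s" unfolding z_def by (rule cInf_lower[OF _ bdZ])
    then show False using that by simp
  qed
  define s1 where "s1 = max ((tau+z)/2) (z - 1/(2*c))"
  have s1: "tau < s1" "s1 < z" "z - s1 \<le> 1/(2*c)" proof -
    have "0 < 1/(2*c)" using cpos by simp
    then show "tau < s1" "s1 < z" using tz unfolding s1_def by (auto simp: max_def)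
    have "z - 1/(2*c) \<le> s1" unfolding s1_def by (rule max.cobounded2)
    then show "z - s1 \<le> 1/(2*c)" by linarith
  qed
  have cont1: "continuous_on {s1..z} (\<lambda>x. - m x)"
    by (rule continuous_on_minus, rule continuous_on_subset[OF cont]) (use s1 z in auto)
  obtain s2 where s2: "s2 \<in> {s1..z}" and s2max: "\<forall>y\<in>{s1..z}. - m y \<le> - m s2"
    using continuous_attains_sup[OF compact_Icc _ cont1] s1 by auto
  define M where "M = - m s2"
  have Mpos: "M > 0"
  proof -
    have "- m s1 \<le> - m s2" using s2max s1 by auto
    moreover have "m s1 < 0" using below[of s1] s1 by linarith
    ultimately show ?thesis unfolding M_def by linarith
  qed
  have s2z: "s2 < z" using s2 z Mpos unfolding M_def by (cases "s2 = z") auto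
  define g where "g = (\<lambda>\<sigma>. if \<sigma> = z then c * M else rhs \<sigma>)"
  have gb: "g \<sigma> \<le> c * M" if "\<sigma> \<in> {s2..z}" for \<sigma>
  proof (cases "\<sigma> = z")
    case True then show ?thesis by (simp add: g_def)
  next
    case False
    then have \<sigma>: "tau < \<sigma>" "\<sigma> < z" using that s2 s1 by auto
    have "ereal \<sigma> < tnext" proof -
      have "ereal \<sigma> < ereal sf" using \<sigma> z by simp
      then show ?thesis using sf(2) by (rule less_le_trans)
    qed
    then have t: "\<theta> * (d \<sigma>)\<^sup>2 \<le> - m \<sigma>" using trig[OF \<sigma>(1)] by simp
    then have "(d \<sigma>)\<^sup>2 \<le> - m \<sigma> / \<theta>" using pos by (simp add: field_simps)
    then have "\<theta>m * (d \<sigma>)\<^sup>2 \<le> \<theta>m * (- m \<sigma> / \<theta>)" using pos by (intro mult_left_mono) auto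
    moreover have "- \<eta> * m \<sigma> + \<theta>m * (- m \<sigma> / \<theta>) = c * (- m \<sigma>)"
      using pos by (simp add: c_def field_simps)
    moreover have "- m \<sigma> \<le> M" using s2max \<sigma> that s2 unfolding M_def by auto
    then have "c * (- m \<sigma>) \<le> c * M" using cpos by (intro mult_left_mono) auto
    ultimately show ?thesis using bnd[rule_format, of \<sigma>] False by (simp add: g_def)
  qed
  have intz: "rhs integrable_on {tau..z}" using iI z by blast
  have int2: "rhs integrable_on {s2..z}"
    by (rule integrable_subinterval_real[OF intz]) (use s2 s1 in auto)
  have eqg: "integral {s2..z} rhs = integral {s2..z} g"
    by (rule integral_spike[of "{z}"]) (auto simp: g_def)
  have intg: "g integrable_on {s2..z}"
    by (rule integrable_spike[OF int2, of "{z}"]) (auto simp: g_def)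
  have "integral {s2..z} g \<le> integral {s2..z} (\<lambda>_. c * M)"
    by (rule integral_le[OF intg]) (use gb in auto)
  also have "\<dots> = (z - s2) * (c * M)" using s2z by simp
  also have "\<dots> \<le> (1/(2*c)) * (c * M)"
    using s1 s2 cpos Mpos by (intro mult_right_mono) auto
  also have "\<dots> = M / 2" using cpos by (simp add: field_simps)
  finally have I: "integral {s2..z} rhs \<le> M / 2" using eqg by simp
  have "integral {tau..s2} rhs + integral {s2..z} rhs = integral {tau..z} rhs"
    by (rule Henstock_Kurzweil_Integration.integral_combine[OF _ _ intz]) (use s2 s1 in auto)
  moreover have "m z = m tau + integral {tau..z} rhs" using mI z by blast
  moreover have "m s2 = m tau + integral {tau..s2} rhs" using s2 s1 by (intro mI) auto
  ultimately have "m z = m s2 + integral {s2..z} rhs" by simp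
  then have "m z \<le> - M + M / 2" using I unfolding M_def by simp
  then show False using Mpos z by simp
qed

lemma sq_int_nonneg: "0 \<le> integral S (\<lambda>x. (f x)\<^sup>2 :: real)"
  by (cases "(\<lambda>x. (f x)\<^sup>2) integrable_on S") (auto intro: integral_nonneg simp: not_integrable_integral)

lemma sqnorm2_nonneg: "0 \<le> sqnorm2 L f g"
  unfolding sqnorm2_def using sq_int_nonneg[of _ f] sq_int_nonneg[of _ g] by (simp add: add_nonneg_nonneg)

lemma aux_le: "(k0::real) > 0 \<Longrightarrow> k1 > 0 \<Longrightarrow> k2 > 0 \<Longrightarrow> 0 \<le> S \<Longrightarrow> a - k0*S - k1*x\<^sup>2 - k2*y\<^sup>2 \<le> a"
proof -
  assume "k0 > 0" "k1 > 0" "k2 > 0" "0 \<le> S"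
  then have "0 \<le> k0*S" "0 \<le> k1*x\<^sup>2" "0 \<le> k2*y\<^sup>2" by auto
  then show ?thesis by linarith
qed

lemma piece_lemma:
  assumes P: "cetc_piece L l1 l2 c1 c2 q \<rho> Pab Pbb Rvu Rvv Kuu Kuv Kvu Kvv
      \<theta> \<eta> \<theta>m \<kappa>0 \<kappa>1 \<kappa>2 tau tnext u v uh vh m"
    and pos: "\<theta> > 0" "\<eta> > 0" "\<theta>m > 0" "\<kappa>0 > 0" "\<kappa>1 > 0" "\<kappa>2 > 0"
    and m0: "m tau < 0" and s0: "tau \<le> s0" "ereal s0 \<le> tnext"
  shows "m s0 < 0"
  using P unfolding cetc_piece_def Let_def
  apply (elim conjE)
  apply (rule piece_neg[where tnext=tnext and tau=tau and m=m and sf=s0 and \<theta>=\<theta> and \<eta>=\<eta> and \<theta>m=\<theta>m])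
  apply assumption
  apply assumption
  apply (intro allI aux_le pos sqnorm2_nonneg)
  apply (rule pos)
  apply (rule pos)
  apply (rule pos)
  apply (rule m0)
  apply (rule s0)
  apply (rule s0)
  done

lemma inf_ge: "tnext = Inf {ereal s | s. tau < s \<and> Q s} \<Longrightarrow> ereal tau \<le> tnext"
  by (auto intro!: Inf_greatest)

lemma piece_ge:
  assumes P: "cetc_piece L l1 l2 c1 c2 q \<rho> Pab Pbb Rvu Rvv Kuu Kuv Kvu Kvv
      \<theta> \<eta> \<theta>m \<kappa>0 \<kappa>1 \<kappa>2 tau tnext u v uh vh m"
  shows "ereal tau \<le> tnext"
  using P unfolding cetc_piece_def Let_def
  apply (elim conjE)
  apply (rule inf_ge)
  apply assumption
  done

lemma ereal_between: "ereal a \<le> x \<Longrightarrow> x \<le> ereal b \<Longrightarrow> x = ereal (real_of_ereal x)"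
  by (cases x) auto

theorem lemma2:
  fixes L l1 l2 q \<rho> \<theta> \<eta> \<theta>m \<kappa>0 \<kappa>1 \<kappa>2 m0 :: real
    and c1 c2 :: "real \<Rightarrow> real"
    and Paa Pab Pba Pbb Ruu Ruv Rvu Rvv Kuu Kuv Kvu Kvv :: kernel
    and t :: "nat \<Rightarrow> ereal"
    and u v uh vh :: "nat \<Rightarrow> real \<Rightarrow> real \<Rightarrow> real"
    and m :: "nat \<Rightarrow> real \<Rightarrow> real"
  assumes "L > 0" "l1 > 0" "l2 > 0"
    and "continuous_on {0..L} c1" "continuous_on {0..L} c2"
    and "q \<noteq> 0" "\<rho> \<noteq> 0" "\<bar>\<rho> * q\<bar> \<le> 1/2"
    and "P_kernels L l1 l2 c1 c2 \<rho> Paa Pab Pba Pbb"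
    and "R_kernels L l1 l2 c1 c2 \<rho> Ruu Ruv Rvu Rvv"
    and "K_kernels L l1 l2 c1 c2 q Kuu Kuv Kvu Kvv"
    and "\<theta> > 0" "\<eta> > 0" "\<theta>m > 0" "\<kappa>0 > 0" "\<kappa>1 > 0" "\<kappa>2 > 0" "m0 < 0"
    and "cetc_closed_loop L l1 l2 c1 c2 q \<rho> Pab Pbb Rvu Rvv Kuu Kuv Kvu Kvv
           \<theta> \<eta> \<theta>m \<kappa>0 \<kappa>1 \<kappa>2 m0 t u v uh vh m"
  shows "\<forall>s::real. 0 \<le> s \<and> ereal s < (SUP k. t k) \<longrightarrow> m_cl t m s < 0"
proof (intro allI impI, elim conjE)
  fix s :: real
  assume s0: "0 \<le> s" and sS: "ereal s < (SUP k. t k)"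
  have pos: "\<theta> > 0" "\<eta> > 0" "\<theta>m > 0" "\<kappa>0 > 0" "\<kappa>1 > 0" "\<kappa>2 > 0" using assms by auto
  have CL: "cetc_closed_loop L l1 l2 c1 c2 q \<rho> Pab Pbb Rvu Rvv Kuu Kuv Kvu Kvv
           \<theta> \<eta> \<theta>m \<kappa>0 \<kappa>1 \<kappa>2 m0 t u v uh vh m" using assms by blast
  have t0: "t 0 = 0" and mz: "m 0 0 = m0" using CL unfolding cetc_closed_loop_def by blast+
  have PC: "cetc_piece L l1 l2 c1 c2 q \<rho> Pab Pbb Rvu Rvv Kuu Kuv Kvu Kvv
        \<theta> \<eta> \<theta>m \<kappa>0 \<kappa>1 \<kappa>2 tau (t (Suc k)) (u k) (v k) (uh k) (vh k) (m k)"
    if "t k = ereal tau" for k tau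
    using CL that unfolding cetc_closed_loop_def by blast
  have GL: "m (Suc k) tau = m k tau" if "t (Suc k) = ereal tau" for k tau
    using CL that unfolding cetc_closed_loop_def by blast
  have neg: "m k s' < 0" if "t k = ereal tau" "m k tau < 0" "tau \<le> s'" "ereal s' \<le> t (Suc k)" for k tau s'
    by (rule piece_lemma[OF PC[OF that(1)] pos that(2-4)])
  have ge: "ereal tau \<le> t (Suc k)" if "t k = ereal tau" for k tau
    by (rule piece_ge[OF PC[OF that]])
  obtain j where j: "ereal s < t j" using sS by (auto simp: less_SUP_iff)
  have "j \<noteq> 0"
  proof
    assume "j = 0"
    then have "ereal s < ereal 0" using j t0 by (simp add: zero_ereal_def)
    then show False using s0 by simp
  qed
  then obtain j' where "j = Suc j'" by (cases j) auto
  then have ex: "\<exists>k. ereal s < t (Suc k)" using j by blast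
  define k where "k = (LEAST k. ereal s < t (Suc k))"
  have kp: "ereal s < t (Suc k)" unfolding k_def using ex by (rule LeastI_ex)
  have kmin: "t (Suc i) \<le> ereal s" if "i < k" for i
    using not_less_Least[OF that[unfolded k_def]] by (simp add: k_def not_less)
  have inv: "i \<le> k \<longrightarrow> (\<exists>tau. t i = ereal tau \<and> tau \<le> s \<and> m i tau < 0)" for i
  proof (induction i)
    case 0
    show ?case using t0 mz s0 assms(18) by (auto simp: zero_ereal_def)
  next
    case (Suc i)
    show ?case
    proof
      assume "Suc i \<le> k"
      then obtain tau where tau: "t i = ereal tau" "tau \<le> s" "m i tau < 0" using Suc.IH by auto
      have up: "t (Suc i) \<le> ereal s" using kmin \<open>Suc i \<le> k\<close> by simp
      have lo: "ereal tau \<le> t (Suc i)" by (rule ge[OF tau(1)])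
      define tau' where "tau' = real_of_ereal (t (Suc i))"
      have e: "t (Suc i) = ereal tau'" unfolding tau'_def by (rule ereal_between[OF lo up])
      have "tau \<le> tau'" using lo e by simp
      moreover have "tau' \<le> s" using up e by simp
      moreover have "m i tau' < 0" by (rule neg[OF tau(1) tau(3) \<open>tau \<le> tau'\<close>]) (simp add: e)
      ultimately show "\<exists>tau. t (Suc i) = ereal tau \<and> tau \<le> s \<and> m (Suc i) tau < 0"
        using GL[OF e] e by auto
    qed
  qed
  obtain tau where tau: "t k = ereal tau" "tau \<le> s" "m k tau < 0" using inv[of k] by auto
  have "m k s < 0" by (rule neg[OF tau(1) tau(3) tau(2)]) (use kp in simp)
  then show "m_cl t m s < 0" unfolding m_cl_def k_def[symmetric] .
qed

end
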